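(* Let $\mathcal{G}$ be an open directed graph with incidence operator $B=B_i\oplus B_b$. The Kirchhoff-Dirac structure $$\mathcal{D}_K(\mathcal{G})=\{(f_1,e^1,f_b,e^b)\in\Lambda_1\times\Lambda^1\times\Lambda_b\times\Lambda^b\mid B_if_1=0,\ B_bf_1=f_b,\ \exists e^{0i}\in\Lambda^{0i}:\ e^1=-B_i^*e^{0i}-B_b^*e^b\}$$ (with flow variables $(f_1,f_b)\in\Lambda_1\times\Lambda_b$ and effort variables $(e^1,e^b)\in\Lambda^1\times\Lambda^b$) is a separable Dirac structure.
   Context: A directed graph has finite vertex set $\mathcal{V}$ ($N$ vertices) and edge set $\mathcal{E}$ ($M$ edges), each edge having distinct tail and head vertices; its incidence matrix $\hat B$ is $N\times M$ with $(i,j)$ entry $1$ if edge $j$ originates at vertex $i$, $-1$ if edge $j$ points towards vertex $i$, $0$ otherwise. Fix a finite-dimensional real vector space $\mathcal{R}$. $\Lambda_0$ (resp. $\Lambda_1$) is the space of functions $\mathcal{V}\to\mathcal{R}$ (resp. $\mathcal{E}\to\mathcal{R}$), with duals $\Lambda^0,\Lambda^1$ (pairings summed over vertices/edges). The incidence operator $B:\Lambda_1\to\Lambda_0$ has matrix $\hat B\otimes I$; $B^*$ is its adjoint. An open graph has a designated set $\mathcal{V}_b$ of boundary vertices, the others $\mathcal{V}_i$ internal; this splits $\Lambda_0=\Lambda_{0i}\oplus\Lambda_{0b}$, $\Lambda^0=\Lambda^{0i}\oplus\Lambda^{0b}$ and $B=B_i\oplus B_b$. The boundary space $\Lambda_b$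 is the space of functions $\mathcal{V}_b\to\mathcal{R}$ (identified with $\Lambda_{0b}$, so $B_b:\Lambda_1\to\Lambda_b$), with dual $\Lambda^b$. A Dirac structure on a flow space $\mathcal{F}$ is a subspace $\mathcal{D}\subset\mathcal{F}\times\mathcal{F}^*$ with $\langle e\mid f\rangle=0$ for all $(f,e)\in\mathcal{D}$ and $\dim\mathcal{D}=\dim\mathcal{F}$; it is separable if $\langle e_a\mid f_b\rangle=0$ for all $(f_a,e_a),(f_b,e_b)\in\mathcal{D}$. *)

theory Defs
  imports "HOL-Analysis.Analysis" "HOL-Library.Function_Algebras" "HOL-Library.Product_Plus"
begin

(* Functions on a finite set S with values in a
   space are represented extensionally (value 0 outside S). *)

definition open_digraph ::
  "'v set \<Rightarrow> 'e set \<Rightarrow> ('e \<Rightarrow> 'v) \<Rightarrow> ('e \<Rightarrow> 'v) \<Rightarrow> 'v set \<Rightarrow> bool" where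
  "open_digraph V E src tgt Vb \<longleftrightarrow> finite V \<and> finite E \<and> Vb \<subseteq> V \<and>
     (\<forall>x\<in>E. src x \<in> V \<and> tgt x \<in> V \<and> src x \<noteq> tgt x)"

definition incid :: "('e \<Rightarrow> 'v) \<Rightarrow> ('e \<Rightarrow> 'v) \<Rightarrow> 'v \<Rightarrow> 'e \<Rightarrow> real" where
  "incid src tgt v x = (if src x = v then 1 else if tgt x = v then -1 else 0)"

definition prim_space :: "'a set \<Rightarrow> ('a \<Rightarrow> 'r::real_vector) set" where
  "prim_space S = {f. \<forall>x. x \<notin> S \<longrightarrow> f x = 0}"

definition dual_space :: "'a set \<Rightarrow> ('a \<Rightarrow> 'r::real_vector \<Rightarrow> real) set" where
  "dual_space S = {e. (\<forall>x\<in>S. linear (e x)) \<and> (\<forall>x. x \<notin> S \<longrightarrow> e x = 0)}"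

definition pairing :: "'a set \<Rightarrow> ('a \<Rightarrow> 'r \<Rightarrow> real) \<Rightarrow> ('a \<Rightarrow> 'r) \<Rightarrow> real" where
  "pairing S e f = (\<Sum>x\<in>S. e x (f x))"

(* incidence operator restricted to a vertex subset W (W = V_i gives B_i, W = V_b gives B_b) *)
definition incB :: "'e set \<Rightarrow> ('e \<Rightarrow> 'v) \<Rightarrow> ('e \<Rightarrow> 'v) \<Rightarrow> 'v set \<Rightarrow> ('e \<Rightarrow> 'r::real_vector) \<Rightarrow> ('v \<Rightarrow> 'r)" where
  "incB E src tgt W f = (\<lambda>v. if v \<in> W then (\<Sum>x\<in>E. incid src tgt v x *\<^sub>R f x) else 0)"

definition incB_adj :: "'e set \<Rightarrow> ('e \<Rightarrow> 'v) \<Rightarrow> ('e \<Rightarrow> 'v) \<Rightarrow> 'v set \<Rightarrow> ('v \<Rightarrow> 'r \<Rightarrow> real) \<Rightarrow> ('e \<Rightarrow> 'r \<Rightarrow> real)" where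
  "incB_adj E src tgt W e = (\<lambda>x. if x \<in> E then (\<lambda>r. \<Sum>v\<in>W. incid src tgt v x * e v r) else 0)"

definition scale_prim :: "real \<Rightarrow> ('a \<Rightarrow> 'r::real_vector) \<Rightarrow> ('a \<Rightarrow> 'r)" where
  "scale_prim c f = (\<lambda>x. c *\<^sub>R f x)"

definition scale_dual :: "real \<Rightarrow> ('a \<Rightarrow> 'r \<Rightarrow> real) \<Rightarrow> ('a \<Rightarrow> 'r \<Rightarrow> real)" where
  "scale_dual c e = (\<lambda>x r. c * e x r)"

type_synonym ('e,'v,'r) flow = "('e \<Rightarrow> 'r) \<times> ('v \<Rightarrow> 'r)"
type_synonym ('e,'v,'r) effort = "('e \<Rightarrow> 'r \<Rightarrow> real) \<times> ('v \<Rightarrow> 'r \<Rightarrow> real)"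

definition scale_flow :: "real \<Rightarrow> ('e,'v,'r::real_vector) flow \<Rightarrow> ('e,'v,'r) flow" where
  "scale_flow c p = (scale_prim c (fst p), scale_prim c (snd p))"

definition scale_bond :: "real \<Rightarrow> ('e,'v,'r::real_vector) flow \<times> ('e,'v,'r) effort
                                \<Rightarrow> ('e,'v,'r) flow \<times> ('e,'v,'r) effort" where
  "scale_bond c q = (scale_flow c (fst q), (scale_dual c (fst (snd q)), scale_dual c (snd (snd q))))"

definition flow_space :: "'e set \<Rightarrow> 'v set \<Rightarrow> ('e,'v,'r::real_vector) flow set" where
  "flow_space E Vb = prim_space E \<times> prim_space Vb"

definition effort_space :: "'e set \<Rightarrow> 'v set \<Rightarrow> ('e,'v,'r::real_vector) effort set" where
  "effort_space E Vb = dual_space E \<times> dual_space Vb"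

definition flow_pairing :: "'e set \<Rightarrow> 'v set \<Rightarrow> ('e,'v,'r) effort \<Rightarrow> ('e,'v,'r) flow \<Rightarrow> real" where
  "flow_pairing E Vb e f = pairing E (fst e) (fst f) + pairing Vb (snd e) (snd f)"

definition dirac_structure :: "'e set \<Rightarrow> 'v set \<Rightarrow> (('e,'v,'r::real_vector) flow \<times> ('e,'v,'r) effort) set \<Rightarrow> bool" where
  "dirac_structure E Vb D \<longleftrightarrow>
     module.subspace scale_bond D \<and>
     D \<subseteq> flow_space E Vb \<times> effort_space E Vb \<and>
     (\<forall>(f, e)\<in>D. flow_pairing E Vb e f = 0) \<and>
     vector_space.dim scale_bond D = vector_space.dim scale_flow (flow_space E Vb :: ('e,'v,'r) flow set)"

definition separable_dirac :: "'e set \<Rightarrow> 'v set \<Rightarrow> (('e,'v,'r::real_vector) flow \<times> ('e,'v,'r) effort) set \<Rightarrow> bool" where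
  "separable_dirac E Vb D \<longleftrightarrow> dirac_structure E Vb D \<and>
     (\<forall>(fa, ea)\<in>D. \<forall>(fb, eb)\<in>D. flow_pairing E Vb ea fb = 0)"

definition kirchhoff_dirac ::
  "'v set \<Rightarrow> 'e set \<Rightarrow> ('e \<Rightarrow> 'v) \<Rightarrow> ('e \<Rightarrow> 'v) \<Rightarrow> 'v set \<Rightarrow> (('e,'v,'r::real_vector) flow \<times> ('e,'v,'r) effort) set" where
  "kirchhoff_dirac V E src tgt Vb =
     {((f1, fb), (e1, eb)).
        f1 \<in> prim_space E \<and> fb \<in> prim_space Vb \<and> e1 \<in> dual_space E \<and> eb \<in> dual_space Vb \<and>
        incB E src tgt (V - Vb) f1 = 0 \<and>
        incB E src tgt Vb f1 = fb \<and>
        (\<exists>e0i \<in> dual_space (V - Vb).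
           e1 = - incB_adj E src tgt (V - Vb) e0i - incB_adj E src tgt Vb eb)}"

end

theory Submission
  imports Defs
begin

lemma vs_prim: "vector_space (scale_prim :: real \<Rightarrow> ('a \<Rightarrow> 'r::real_vector) \<Rightarrow> _)"
  by unfold_locales (auto simp: scale_prim_def fun_eq_iff algebra_simps)
lemma vs_dual: "vector_space (scale_dual :: real \<Rightarrow> ('a \<Rightarrow> 'r \<Rightarrow> real) \<Rightarrow> _)"
  by unfold_locales (auto simp: scale_dual_def fun_eq_iff algebra_simps)
lemma vs_flow: "vector_space (scale_flow :: real \<Rightarrow> ('e,'v,'r::real_vector) flow \<Rightarrow> _)"
  by unfold_locales (auto simp: scale_flow_def scale_prim_def fun_eq_iff algebra_simps prod_eq_iff)
lemma vs_bond: "vector_space (scale_bond :: real \<Rightarrow> ('e,'v,'r::real_vector) flow \<times> ('e,'v,'r) effort \<Rightarrow> _)"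
  by unfold_locales (auto simp: scale_bond_def scale_dual_def scale_flow_def scale_prim_def fun_eq_iff algebra_simps prod_eq_iff)

lemma incB_add: "incB E s t W (f + g) = incB E s t W f + incB E s t W g"
  by (auto simp: incB_def fun_eq_iff scaleR_add_right sum.distrib)
lemma incB_scale: "incB E s t W (scale_prim c f) = scale_prim c (incB E s t W f)"
  by (auto simp: incB_def scale_prim_def fun_eq_iff scaleR_sum_right mult.commute)
lemma incB_zero: "incB E s t W 0 = 0"
  by (auto simp: incB_def fun_eq_iff)
lemma incB_adj_add: "incB_adj E s t W (e + e') = incB_adj E s t W e + incB_adj E s t W e'"
  by (auto simp: incB_adj_def fun_eq_iff sum.distrib distrib_left)
lemma incB_adj_scale: "incB_adj E s t W (scale_dual c e) = scale_dual c (incB_adj E s t W e)"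
  by (auto simp: incB_adj_def scale_dual_def fun_eq_iff sum_distrib_left mult.left_commute)
lemma incB_adj_zero: "incB_adj E s t W 0 = 0"
  by (auto simp: incB_adj_def fun_eq_iff)

lemma prim_zero: "0 \<in> prim_space S" by (simp add: prim_space_def)
lemma prim_add: "f \<in> prim_space S \<Longrightarrow> g \<in> prim_space S \<Longrightarrow> f + g \<in> prim_space S"
  by (simp add: prim_space_def)
lemma prim_diff: "f \<in> prim_space S \<Longrightarrow> g \<in> prim_space S \<Longrightarrow> f - g \<in> prim_space S"
  by (simp add: prim_space_def)
lemma prim_uminus: "f \<in> prim_space S \<Longrightarrow> - f \<in> prim_space S"
  by (simp add: prim_space_def)
lemma prim_scale: "f \<in> prim_space S \<Longrightarrow> scale_prim c f \<in> prim_space S"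
  by (simp add: prim_space_def scale_prim_def)
lemma incB_prim: "incB E s t W f \<in> prim_space W"
  by (simp add: prim_space_def incB_def)

lemma dual_zero: "0 \<in> dual_space S" by (simp add: dual_space_def linearI)
lemma dual_add: "e \<in> dual_space S \<Longrightarrow> e' \<in> dual_space S \<Longrightarrow> e + e' \<in> dual_space S"
  by (auto simp: dual_space_def intro!: linearI simp: linear_add linear_scale algebra_simps)
lemma dual_uminus: "e \<in> dual_space S \<Longrightarrow> - e \<in> dual_space S"
  by (auto simp: dual_space_def intro!: linearI simp: linear_add linear_scale algebra_simps)
lemma dual_diff: "e \<in> dual_space S \<Longrightarrow> e' \<in> dual_space S \<Longrightarrow> e - e' \<in> dual_space S"
  by (auto simp: dual_space_def intro!: linearI simp: linear_add linear_scale algebra_simps)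
lemma dual_scale: "e \<in> dual_space S \<Longrightarrow> scale_dual c e \<in> dual_space S"
  by (auto simp: dual_space_def scale_dual_def fun_eq_iff intro!: linearI simp: linear_add linear_scale algebra_simps)

lemma adj_dual:
  assumes "e \<in> dual_space W"
  shows "incB_adj E s t W e \<in> dual_space E"
proof -
  have "linear (\<lambda>r. \<Sum>v\<in>W. incid s t v x * e v r)" for x
  proof (rule linearI)
    fix a b show "(\<Sum>v\<in>W. incid s t v x * e v (a + b)) = (\<Sum>v\<in>W. incid s t v x * e v a) + (\<Sum>v\<in>W. incid s t v x * e v b)"
      using assms by (auto simp: dual_space_def linear_add sum.distrib[symmetric] algebra_simps intro!: sum.cong)
  next
    fix c a show "(\<Sum>v\<in>W. incid s t v x * e v (c *\<^sub>R a)) = c *\<^sub>R (\<Sum>v\<in>W. incid s t v x * e v a)"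
      using assms by (auto simp: dual_space_def linear_scale sum_distrib_left algebra_simps intro!: sum.cong)
  qed
  then show ?thesis by (auto simp: dual_space_def incB_adj_def)
qed

lemma adj_pair:
  assumes "e \<in> dual_space W"
  shows "pairing E (incB_adj E s t W e) f = pairing W e (incB E s t W f)"
proof -
  have "pairing W e (incB E s t W f) = (\<Sum>v\<in>W. \<Sum>x\<in>E. incid s t v x * e v (f x))"
    unfolding pairing_def incB_def
    using assms by (auto simp: dual_space_def linear_sum linear_scale intro!: sum.cong)
  also have "\<dots> = (\<Sum>x\<in>E. \<Sum>v\<in>W. incid s t v x * e v (f x))" by (rule sum.swap)
  also have "\<dots> = pairing E (incB_adj E s t W e) f"
    unfolding pairing_def incB_adj_def by simp
  finally show ?thesis by simp
qed


definition rz :: "('a \<Rightarrow> 'r::euclidean_space \<Rightarrow> real) \<Rightarrow> 'a \<Rightarrow> 'r" where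
  "rz e = (\<lambda>x. \<Sum>b\<in>Basis. e x b *\<^sub>R b)"
definition rho :: "('a \<Rightarrow> 'r::euclidean_space) \<Rightarrow> 'a \<Rightarrow> 'r \<Rightarrow> real" where
  "rho w = (\<lambda>x r. w x \<bullet> r)"
definition tadj :: "'e set \<Rightarrow> ('e \<Rightarrow> 'v) \<Rightarrow> ('e \<Rightarrow> 'v) \<Rightarrow> 'v set \<Rightarrow> ('v \<Rightarrow> 'r::real_vector) \<Rightarrow> 'e \<Rightarrow> 'r" where
  "tadj E s t W u = (\<lambda>x. if x \<in> E then \<Sum>v\<in>W. incid s t v x *\<^sub>R u v else 0)"
definition ip :: "'e set \<Rightarrow> ('e \<Rightarrow> 'r::euclidean_space) \<Rightarrow> ('e \<Rightarrow> 'r) \<Rightarrow> real" where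
  "ip E f g = (\<Sum>x\<in>E. f x \<bullet> g x)"

lemma riesz_lin:
  fixes \<phi> :: "'r::euclidean_space \<Rightarrow> real"
  assumes "linear \<phi>"
  shows "\<phi> r = (\<Sum>b\<in>Basis. \<phi> b *\<^sub>R b) \<bullet> r"
proof -
  have "\<phi> r = \<phi> (\<Sum>b\<in>Basis. (r \<bullet> b) *\<^sub>R b)" by (simp add: euclidean_representation)
  also have "\<dots> = (\<Sum>b\<in>Basis. (r \<bullet> b) * \<phi> b)"
    using assms by (simp add: linear_sum linear_scale)
  also have "\<dots> = (\<Sum>b\<in>Basis. \<phi> b *\<^sub>R b) \<bullet> r"
    by (simp add: inner_sum_left inner_sum_right mult.commute inner_commute)
  finally show ?thesis .
qed

lemma rz_pair: "e \<in> dual_space S \<Longrightarrow> x \<in> S \<Longrightarrow> e x r = rz e x \<bullet> r"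
  unfolding rz_def dual_space_def using riesz_lin by blast

lemma rz_prim: "e \<in> dual_space S \<Longrightarrow> rz e \<in> prim_space S"
  by (simp add: rz_def dual_space_def prim_space_def)

lemma rz_add: "rz (e + e') = rz e + rz e'"
  by (simp add: rz_def fun_eq_iff scaleR_add_left sum.distrib)
lemma rz_uminus: "rz (- e) = - rz e"
  by (simp add: rz_def fun_eq_iff sum_negf)
lemma rz_diff: "rz (e - e') = rz e - rz e'"
  by (simp add: rz_def fun_eq_iff scaleR_diff_left sum_subtractf)
lemma rz_scale: "rz (scale_dual c e) = scale_prim c (rz e)"
  by (simp add: rz_def scale_dual_def scale_prim_def fun_eq_iff scaleR_sum_right)
lemma rz_zero: "rz 0 = 0"
  by (simp add: rz_def fun_eq_iff)

lemma rho_dual: "w \<in> prim_space S \<Longrightarrow> rho w \<in> dual_space S"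
  by (auto simp: rho_def dual_space_def prim_space_def fun_eq_iff intro!: linearI simp: inner_add_right)

lemma rz_rho: "rz (rho w) = w"
proof -
  have "(\<Sum>b\<in>Basis. (w x \<bullet> b) *\<^sub>R b) = w x" for x by (rule euclidean_representation)
  then show ?thesis by (simp add: rz_def rho_def fun_eq_iff)
qed

lemma rz_inj: assumes "e \<in> dual_space S" "rz e = 0" shows "e = 0"
proof (rule ext, rule ext)
  fix x r show "e x r = 0 x r"
  proof (cases "x \<in> S")
    case True then show ?thesis using rz_pair[OF assms(1) True, of r] assms(2) by simp
  next
    case False then show ?thesis using assms(1) by (simp add: dual_space_def)
  qed
qed

lemma rz_adj: "rz (incB_adj E s t W e) = tadj E s t W (rz e)"
  by (auto simp: rz_def incB_adj_def tadj_def fun_eq_iff scaleR_sum_right scaleR_sum_left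
      intro: sum.swap)


interpretation P: vector_space "scale_prim :: real \<Rightarrow> ('a \<Rightarrow> 'r::real_vector) \<Rightarrow> _"
  by (rule vs_prim)

lemma ip_sym: "ip E f g = ip E g f" by (simp add: ip_def inner_commute)
lemma ip_add_right: "ip E f (g + h) = ip E f g + ip E f h"
  by (simp add: ip_def inner_add_right sum.distrib)
lemma ip_diff_right: "ip E f (g - h) = ip E f g - ip E f h"
  by (simp add: ip_def inner_diff_right sum_subtractf)
lemma ip_scale_right: "ip E f (scale_prim c g) = c * ip E f g"
  by (simp add: ip_def scale_prim_def sum_distrib_left)
lemma ip_zero_right: "ip E f 0 = 0" by (simp add: ip_def)
lemma ip_diff_left: "ip E (f - h) g = ip E f g - ip E h g"
  by (simp add: ip_def inner_diff_left sum_subtractf)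
lemma ip_scale_left: "ip E (scale_prim c f) g = c * ip E f g"
  by (simp add: ip_def scale_prim_def sum_distrib_left)

lemma ip_self_zero: "finite E \<Longrightarrow> ip E f f = 0 \<Longrightarrow> x \<in> E \<Longrightarrow> f x = 0"
  unfolding ip_def by (subst (asm) sum_nonneg_eq_0_iff) auto

lemma ortho_span:
  assumes "\<forall>b\<in>A. ip E y b = 0" "z \<in> P.span A"
  shows "ip E y z = 0"
proof -
  have "P.subspace {z. ip E y z = 0}"
    by (auto simp: P.subspace_def ip_zero_right ip_add_right ip_scale_right)
  then have "P.span A \<subseteq> {z. ip E y z = 0}" using assms(1) by (intro P.span_minimal) auto
  then show ?thesis using assms(2) by auto
qed

lemma gs:
  fixes A :: "('e \<Rightarrow> 'r::euclidean_space) set"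
  assumes E: "finite E" and "finite A"
  shows "\<exists>s\<in>P.span A. \<forall>a\<in>A. ip E (g - s) a = 0"
  using assms(2)
proof (induction A arbitrary: g rule: finite_induct)
  case empty
  then show ?case using P.span_zero by blast
next
  case (insert a A)
  obtain s where s: "s \<in> P.span A" "\<forall>b\<in>A. ip E (g - s) b = 0" using insert.IH by blast
  obtain t where t: "t \<in> P.span A" "\<forall>b\<in>A. ip E (a - t) b = 0" using insert.IH by blast
  define a' where "a' = a - t"
  have aeq: "a = a' + t" by (simp add: a'_def)
  have sub: "P.span A \<subseteq> P.span (insert a A)" by (rule P.span_mono) auto
  have a'sp: "a' \<in> P.span (insert a A)"
    unfolding a'_def using t(1) sub by (intro P.span_diff) (auto intro: P.span_base)
  show ?case
  proof (cases "ip E a' a' = 0")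
    case True
    then have "\<forall>x\<in>E. a' x = 0" using ip_self_zero[OF E] by blast
    then have z: "ip E y a' = 0" for y by (simp add: ip_def)
    have "ip E (g - s) a = 0"
      unfolding aeq ip_add_right using z ortho_span[OF s(2) t(1)] by simp
    then have "\<forall>b\<in>insert a A. ip E (g - s) b = 0" using s(2) \<open>ip E (g - s) a = 0\<close> by (simp only: ball_simps)
    moreover have "s \<in> P.span (insert a A)" using sub s(1) by (rule subsetD)
    ultimately show ?thesis by (rule bexI)
  next
    case False
    define c where "c = ip E (g - s) a' / ip E a' a'"
    define s' where "s' = s + scale_prim c a'"
    have gs': "g - s' = (g - s) - scale_prim c a'" by (simp add: s'_def algebra_simps)
    have s'sp: "s' \<in> P.span (insert a A)"
      unfolding s'_def using s(1) sub a'sp by (intro P.span_add P.span_scale) auto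
    have oA: "\<forall>b\<in>A. ip E (g - s') b = 0"
    proof
      fix b assume b: "b \<in> A"
      have "ip E (g - s') b = ip E (g - s) b - c * ip E a' b" by (simp only: gs' ip_diff_left ip_scale_left)
      also have "\<dots> = 0" using s(2) t(2) b unfolding a'_def by simp
      finally show "ip E (g - s') b = 0" .
    qed
    have "ip E (g - s') a' = ip E (g - s) a' - c * ip E a' a'" by (simp only: gs' ip_diff_left ip_scale_left)
    also have "\<dots> = 0" using False unfolding c_def by simp
    finally have "ip E (g - s') a' = 0" .
    moreover have "ip E (g - s') t = 0" using ortho_span[OF oA t(1)] .
    ultimately have "ip E (g - s') a = 0" unfolding aeq ip_add_right by simp
    then have "\<forall>b\<in>insert a A. ip E (g - s') b = 0" using oA \<open>ip E (g - s') a = 0\<close> by (simp only: ball_simps)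
    then show ?thesis using s'sp by (rule bexI)
  qed
qed


lemma sum_fun_apply: "(\<Sum>i\<in>I. h i) x = (\<Sum>i\<in>I. h i x)"
  by (induction I rule: infinite_finite_induct) auto

lemma tadj_add: "tadj E s t W (u + u') = tadj E s t W u + tadj E s t W u'"
  by (auto simp: tadj_def fun_eq_iff scaleR_add_right sum.distrib)
lemma tadj_scale: "tadj E s t W (scale_prim c u) = scale_prim c (tadj E s t W u)"
  by (auto simp: tadj_def scale_prim_def fun_eq_iff scaleR_sum_right mult.commute)
lemma tadj_zero: "tadj E s t W 0 = 0"
  by (auto simp: tadj_def fun_eq_iff)

lemma ip_tadj:
  fixes k :: "'e \<Rightarrow> 'r::euclidean_space"
  shows "ip E k (tadj E s t W u) = (\<Sum>v\<in>W. u v \<bullet> incB E s t W k v)"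
proof -
  have "ip E k (tadj E s t W u) = (\<Sum>x\<in>E. \<Sum>v\<in>W. incid s t v x * (k x \<bullet> u v))"
    unfolding ip_def tadj_def by (simp add: inner_sum_right)
  also have "\<dots> = (\<Sum>v\<in>W. \<Sum>x\<in>E. incid s t v x * (k x \<bullet> u v))" by (rule sum.swap)
  also have "\<dots> = (\<Sum>v\<in>W. u v \<bullet> incB E s t W k v)"
    unfolding incB_def by (simp add: inner_sum_right inner_commute)
  finally show ?thesis .
qed

lemma decomp:
  fixes g :: "'e \<Rightarrow> 'r::euclidean_space" and W :: "'v set" and s t :: "'e \<Rightarrow> 'v"
  assumes E: "finite E" and W: "finite W"
  shows "\<exists>e0\<in>dual_space W. incB E s t W (g - rz (incB_adj E s t W e0)) = 0"
proof -
  define \<delta> :: "'v \<Rightarrow> 'r \<Rightarrow> 'v \<Rightarrow> 'r" where "\<delta> v b = (\<lambda>y. if y = v then b else 0)" for v b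
  define A where "A = (\<lambda>p. tadj E s t W (\<delta> (fst p) (snd p))) ` (W \<times> Basis)"
  have fA: "finite A" unfolding A_def using W by simp
  obtain s0 where s0: "s0 \<in> P.span A" "\<forall>a\<in>A. ip E (g - s0) a = 0"
    using gs[OF E fA] by blast
  define S' :: "('e \<Rightarrow> 'r) set" where "S' = tadj E s t W ` prim_space W"
  have subS': "P.subspace S'"
    unfolding P.subspace_def S'_def
  proof (intro conjI ballI allI)
    show "(0::'e\<Rightarrow>'r) \<in> tadj E s t W ` prim_space W" using tadj_zero prim_zero by (metis image_eqI)
  next
    fix x y :: "'e \<Rightarrow> 'r" assume "x \<in> tadj E s t W ` prim_space W" "y \<in> tadj E s t W ` prim_space W"
    then obtain u u' where "u \<in> prim_space W" "u' \<in> prim_space W" "x = tadj E s t W u" "y = tadj E s t W u'" by blast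
    then show "x + y \<in> tadj E s t W ` prim_space W"
      using tadj_add prim_add by (metis image_eqI)
  next
    fix c :: real and x :: "'e \<Rightarrow> 'r" assume "x \<in> tadj E s t W ` prim_space W"
    then obtain u where "u \<in> prim_space W" "x = tadj E s t W u" by blast
    then show "scale_prim c x \<in> tadj E s t W ` prim_space W"
      using tadj_scale prim_scale by (metis image_eqI)
  qed
  have "A \<subseteq> S'"
    unfolding A_def S'_def by (auto simp: \<delta>_def prim_space_def)
  then have "P.span A \<subseteq> S'" using subS' by (rule P.span_minimal)
  then obtain u where u: "u \<in> prim_space W" "s0 = tadj E s t W u" using s0(1) unfolding S'_def by blast
  define k where "k = g - s0"
  have expand: "tadj E s t W w = (\<Sum>p\<in>W \<times> Basis. scale_prim (w (fst p) \<bullet> snd p) (tadj E s t W (\<delta> (fst p) (snd p))))"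
    if w: "w \<in> prim_space W" for w
  proof (rule ext)
    fix x
    show "tadj E s t W w x = (\<Sum>p\<in>W \<times> Basis. scale_prim (w (fst p) \<bullet> snd p) (tadj E s t W (\<delta> (fst p) (snd p)))) x"
    proof (cases "x \<in> E")
      case False then show ?thesis by (simp add: sum_fun_apply tadj_def scale_prim_def)
    next
      case True
      have inner: "(\<Sum>v'\<in>W. incid s t v' x *\<^sub>R \<delta> v b v') = incid s t v x *\<^sub>R b" if "v \<in> W" for v b
      proof -
        have "(\<Sum>v'\<in>W. incid s t v' x *\<^sub>R \<delta> v b v') = (\<Sum>v'\<in>W. if v' = v then incid s t v x *\<^sub>R b else 0)"
          by (rule sum.cong) (auto simp: \<delta>_def)
        also have "\<dots> = incid s t v x *\<^sub>R b" using that W by (simp add: sum.delta')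
        finally show ?thesis .
      qed
      have "(\<Sum>p\<in>W \<times> Basis. scale_prim (w (fst p) \<bullet> snd p) (tadj E s t W (\<delta> (fst p) (snd p)))) x
          = (\<Sum>p\<in>W \<times> Basis. (w (fst p) \<bullet> snd p) *\<^sub>R (incid s t (fst p) x *\<^sub>R snd p))"
        using True by (auto simp: sum_fun_apply scale_prim_def tadj_def inner intro!: sum.cong)
      also have "\<dots> = (\<Sum>v\<in>W. \<Sum>b\<in>Basis. (w v \<bullet> b) *\<^sub>R (incid s t v x *\<^sub>R b))"
        by (simp add: sum.cartesian_product split_def)
      also have "\<dots> = (\<Sum>v\<in>W. incid s t v x *\<^sub>R (\<Sum>b\<in>Basis. (w v \<bullet> b) *\<^sub>R b))"
        by (simp add: scaleR_sum_right mult.commute)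
      also have "\<dots> = (\<Sum>v\<in>W. incid s t v x *\<^sub>R w v)"
        by (simp add: euclidean_representation)
      finally show ?thesis using True by (simp add: tadj_def)
    qed
  qed
  have inspan: "tadj E s t W w \<in> P.span A" if w: "w \<in> prim_space W" for w
    unfolding expand[OF w] A_def
    by (intro P.span_sum P.span_scale P.span_base) auto
  have "incB E s t W k \<in> prim_space W" by (rule incB_prim)
  then have "ip E k (tadj E s t W (incB E s t W k)) = 0"
    using ortho_span[OF _ inspan] s0(2) unfolding k_def by blast
  then have "(\<Sum>v\<in>W. incB E s t W k v \<bullet> incB E s t W k v) = 0" by (simp add: ip_tadj)
  then have "\<forall>v\<in>W. incB E s t W k v \<bullet> incB E s t W k v = 0"
    using W by (subst (asm) sum_nonneg_eq_0_iff) auto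
  then have Tk: "incB E s t W k = 0" by (auto simp: fun_eq_iff incB_def)
  have "rho u \<in> dual_space W" using u(1) by (rule rho_dual)
  moreover have "rz (incB_adj E s t W (rho u)) = s0" by (simp add: rz_adj rz_rho u(2))
  ultimately show ?thesis using Tk unfolding k_def by metis
qed


lemma dim_transfer:
  assumes vs1: "vector_space s1" and vs2: "vector_space s2"
    and L: "module_hom s1 s2 L"
    and D: "module.subspace s1 D" and inj: "inj_on L D" and img: "L ` D = F"
  shows "vector_space.dim s1 D = vector_space.dim s2 F"
proof -
  interpret v1: vector_space s1 by (rule vs1)
  interpret v2: vector_space s2 by (rule vs2)
  interpret h: module_hom s1 s2 L by (rule L)
  obtain B where B: "B \<subseteq> D" "v1.independent B" "D \<subseteq> v1.span B" "card B = v1.dim D"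
    using v1.basis_exists by blast
  have spB: "v1.span B = D"
    using B D v1.span_minimal v1.span_mono by (metis subset_antisym)
  have "v2.independent (L ` B)"
    using h.independent_injective_image[OF B(2)] inj spB by simp
  moreover have "L ` B \<subseteq> F" using B img by auto
  moreover have "F \<subseteq> v2.span (L ` B)" using h.spans_image[OF B(3)] img by simp
  ultimately have "card (L ` B) = v2.dim F" using v2.basis_card_eq_dim by blast
  moreover have "card (L ` B) = card B" using inj B(1) card_image inj_on_subset by blast
  ultimately show ?thesis using B(4) by simp
qed

lemma kd_mem:
  "((f1, fb), (e1, eb)) \<in> kirchhoff_dirac V E s t Vb \<longleftrightarrow>
     f1 \<in> prim_space E \<and> fb \<in> prim_space Vb \<and> e1 \<in> dual_space E \<and> eb \<in> dual_space Vb \<and>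
     incB E s t (V - Vb) f1 = 0 \<and> incB E s t Vb f1 = fb \<and>
     (\<exists>e0i \<in> dual_space (V - Vb). e1 = - incB_adj E s t (V - Vb) e0i - incB_adj E s t Vb eb)"
  by (simp add: kirchhoff_dirac_def)

lemma scale_dual_lin: "scale_dual c (- X - Y) = - scale_dual c X - scale_dual c Y"
  by (simp add: scale_dual_def fun_eq_iff algebra_simps)
lemma scale_prim_lin: "scale_prim c (a - b - d) = scale_prim c a - scale_prim c b - scale_prim c d"
  by (simp add: scale_prim_def fun_eq_iff algebra_simps)

lemma pairing_lin: "pairing S (- X - Y) f = - pairing S X f - pairing S Y f"
  by (simp add: pairing_def sum_negf sum_subtractf)

lemma pairing_zero: "e \<in> dual_space S \<Longrightarrow> pairing S e 0 = 0"
  by (auto simp: pairing_def dual_space_def linear_0 intro!: sum.neutral)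

lemma sep:
  assumes "open_digraph V E s t Vb"
    and d1: "((f1, fb), (e1, eb)) \<in> kirchhoff_dirac V E s t Vb"
    and d2: "((f1', fb'), (e1', eb')) \<in> kirchhoff_dirac V E s t Vb"
  shows "flow_pairing E Vb (e1, eb) (f1', fb') = 0"
proof -
  from d1 obtain e0 where e0: "e0 \<in> dual_space (V - Vb)" "e1 = - incB_adj E s t (V - Vb) e0 - incB_adj E s t Vb eb"
    and eb: "eb \<in> dual_space Vb" by (auto simp: kd_mem)
  from d2 have T: "incB E s t (V - Vb) f1' = 0" "incB E s t Vb f1' = fb'" by (auto simp: kd_mem)
  have "pairing E e1 f1' = - pairing (V - Vb) e0 (incB E s t (V - Vb) f1') - pairing Vb eb (incB E s t Vb f1')"
    unfolding e0(2) pairing_lin adj_pair[OF e0(1)] adj_pair[OF eb] ..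
  also have "\<dots> = - pairing Vb eb fb'" using T pairing_zero[OF e0(1)] by simp
  finally show ?thesis by (simp add: flow_pairing_def)
qed

interpretation Bd: vector_space "scale_bond :: real \<Rightarrow> ('e,'v,'r::real_vector) flow \<times> ('e,'v,'r) effort \<Rightarrow> _"
  by (rule vs_bond)

lemma kd_subspace:
  "Bd.subspace (kirchhoff_dirac V E s t Vb :: (('e,'v,'r::euclidean_space) flow \<times> ('e,'v,'r) effort) set)"
  unfolding Bd.subspace_def
proof (intro conjI ballI allI)
  show "0 \<in> (kirchhoff_dirac V E s t Vb :: (('e,'v,'r::euclidean_space) flow \<times> ('e,'v,'r) effort) set)"
  proof -
    have "(0::'v \<Rightarrow> 'r \<Rightarrow> real) \<in> dual_space (V - Vb)" by (rule dual_zero)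
    moreover have "incB_adj E s t (V - Vb) (0::'v \<Rightarrow> 'r \<Rightarrow> real) = 0" by (rule incB_adj_zero)
    ultimately show ?thesis unfolding zero_prod_def kd_mem
      by (auto simp: prim_zero dual_zero incB_zero incB_adj_zero intro!: bexI[where x=0])
  qed
next
  fix x y :: "('e,'v,'r) flow \<times> ('e,'v,'r) effort"
  assume x: "x \<in> kirchhoff_dirac V E s t Vb" and y: "y \<in> kirchhoff_dirac V E s t Vb"
  obtain f1 fb e1 eb where xe: "x = ((f1, fb), (e1, eb))" by (metis prod.collapse)
  obtain f1' fb' e1' eb' where ye: "y = ((f1', fb'), (e1', eb'))" by (metis prod.collapse)
  from x obtain e0 where e0: "e0 \<in> dual_space (V - Vb)" "e1 = - incB_adj E s t (V - Vb) e0 - incB_adj E s t Vb eb"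
    unfolding xe kd_mem by blast
  from y obtain e0' where e0': "e0' \<in> dual_space (V - Vb)" "e1' = - incB_adj E s t (V - Vb) e0' - incB_adj E s t Vb eb'"
    unfolding ye kd_mem by blast
  have "e1 + e1' = - incB_adj E s t (V - Vb) (e0 + e0') - incB_adj E s t Vb (eb + eb')"
    unfolding e0(2) e0'(2) incB_adj_add by (simp add: algebra_simps)
  moreover have "e0 + e0' \<in> dual_space (V - Vb)" using e0 e0' by (simp add: dual_add)
  moreover have m1: "f1 \<in> prim_space E" "fb \<in> prim_space Vb" "e1 \<in> dual_space E" "eb \<in> dual_space Vb"
     "incB E s t (V - Vb) f1 = 0" "incB E s t Vb f1 = fb" using x unfolding xe kd_mem by blast+
  moreover have m2: "f1' \<in> prim_space E" "fb' \<in> prim_space Vb" "e1' \<in> dual_space E" "eb' \<in> dual_space Vb"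
     "incB E s t (V - Vb) f1' = 0" "incB E s t Vb f1' = fb'" using y unfolding ye kd_mem by blast+
  ultimately show "x + y \<in> kirchhoff_dirac V E s t Vb"
    unfolding xe ye add_Pair kd_mem
    by (intro conjI prim_add dual_add bexI[of _ "e0 + e0'"]) (simp_all add: incB_add e0(1) e0'(1))
next
  fix c :: real and x :: "('e,'v,'r) flow \<times> ('e,'v,'r) effort"
  assume x: "x \<in> kirchhoff_dirac V E s t Vb"
  obtain f1 fb e1 eb where xe: "x = ((f1, fb), (e1, eb))" by (metis prod.collapse)
  from x obtain e0 where e0: "e0 \<in> dual_space (V - Vb)" "e1 = - incB_adj E s t (V - Vb) e0 - incB_adj E s t Vb eb"
    unfolding xe kd_mem by blast
  have "scale_dual c e1 = - incB_adj E s t (V - Vb) (scale_dual c e0) - incB_adj E s t Vb (scale_dual c eb)"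
    unfolding e0(2) scale_dual_lin incB_adj_scale ..
  moreover have "scale_dual c e0 \<in> dual_space (V - Vb)" using e0 by (simp add: dual_scale)
  moreover have m1: "f1 \<in> prim_space E" "fb \<in> prim_space Vb" "e1 \<in> dual_space E" "eb \<in> dual_space Vb"
     "incB E s t (V - Vb) f1 = 0" "incB E s t Vb f1 = fb" using x unfolding xe kd_mem by blast+
  ultimately show "scale_bond c x \<in> kirchhoff_dirac V E s t Vb"
    unfolding xe scale_bond_def scale_flow_def fst_conv snd_conv kd_mem
    by (intro conjI prim_scale dual_scale bexI[of _ "scale_dual c e0"]) (simp_all add: incB_scale incB_zero e0(1))
qed


definition Lmap :: "'e set \<Rightarrow> ('e \<Rightarrow> 'v) \<Rightarrow> ('e \<Rightarrow> 'v) \<Rightarrow> 'v set \<Rightarrow> ('e,'v,'r::euclidean_space) flow \<times> ('e,'v,'r) effort \<Rightarrow> ('e,'v,'r) flow" where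
  "Lmap E s t Vb q = (fst (fst q) - rz (fst (snd q)) - rz (incB_adj E s t Vb (snd (snd q))), rz (snd (snd q)))"

lemma Lmap_hom: "module_hom scale_bond scale_flow (Lmap E s t Vb :: ('e,'v,'r::euclidean_space) flow \<times> ('e,'v,'r) effort \<Rightarrow> _)"
  unfolding module_hom_iff_linear Vector_Spaces.linear_iff
proof (intro conjI allI vs_bond vs_flow)
  fix x y :: "('e,'v,'r) flow \<times> ('e,'v,'r) effort"
  show "Lmap E s t Vb (x + y) = Lmap E s t Vb x + Lmap E s t Vb y"
    by (simp add: Lmap_def rz_add incB_adj_add algebra_simps)
next
  fix c :: real and x :: "('e,'v,'r) flow \<times> ('e,'v,'r) effort"
  show "Lmap E s t Vb (scale_bond c x) = scale_flow c (Lmap E s t Vb x)"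
    by (simp add: Lmap_def scale_bond_def scale_flow_def rz_scale incB_adj_scale scale_prim_lin)
qed

theorem proposition6p1:
  fixes V :: "'v set" and E :: "'e set" and src tgt :: "'e \<Rightarrow> 'v" and Vb :: "'v set"
  assumes "open_digraph V E src tgt Vb"
  shows "separable_dirac E Vb (kirchhoff_dirac V E src tgt Vb :: (('e,'v,'r::euclidean_space) flow \<times> ('e,'v,'r) effort) set)"
proof -
  define D where "D = (kirchhoff_dirac V E src tgt Vb :: (('e,'v,'r::euclidean_space) flow \<times> ('e,'v,'r) effort) set)"
  define L where "L = (Lmap E src tgt Vb :: ('e,'v,'r) flow \<times> ('e,'v,'r) effort \<Rightarrow> _)"
  have fin: "finite V" "finite E" "Vb \<subseteq> V" using assms by (auto simp: open_digraph_def)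
  have finVi: "finite (V - Vb)" and finVb: "finite Vb" using fin finite_subset by auto
  have sepD: "\<forall>(fa, ea)\<in>D. \<forall>(fb, eb)\<in>D. flow_pairing E Vb ea fb = 0"
  proof (intro ballI, clarify)
    fix f1 fb e1 eb f1' fb' e1' eb'
    assume "((f1, fb), e1, eb) \<in> D" "((f1', fb'), e1', eb') \<in> D"
    then show "flow_pairing E Vb (e1, eb) (f1', fb') = 0"
      unfolding D_def by (rule sep[OF assms])
  qed
  have sub: "Bd.subspace D" unfolding D_def by (rule kd_subspace)
  have subset: "D \<subseteq> flow_space E Vb \<times> effort_space E Vb"
  proof
    fix q assume q: "q \<in> D"
    obtain f1 fb e1 eb where qe: "q = ((f1, fb), (e1, eb))" by (metis prod.collapse)
    show "q \<in> flow_space E Vb \<times> effort_space E Vb"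
      using q unfolding qe D_def kd_mem by (auto simp: flow_space_def effort_space_def)
  qed
  have ker: "\<forall>q\<in>D. L q = 0 \<longrightarrow> q = 0"
  proof (intro ballI impI)
    fix q assume q: "q \<in> D" and Lq: "L q = 0"
    obtain f1 fb e1 eb where qe: "q = ((f1, fb), (e1, eb))" by (metis prod.collapse)
    from q have m: "f1 \<in> prim_space E" "fb \<in> prim_space Vb" "e1 \<in> dual_space E" "eb \<in> dual_space Vb"
     "incB E src tgt (V - Vb) f1 = 0" "incB E src tgt Vb f1 = fb" unfolding qe D_def kd_mem by blast+
    from q obtain e0 where e0: "e0 \<in> dual_space (V - Vb)" "e1 = - incB_adj E src tgt (V - Vb) e0 - incB_adj E src tgt Vb eb"
      unfolding qe D_def kd_mem by blast
    from Lq have L1: "f1 - rz e1 - rz (incB_adj E src tgt Vb eb) = 0" and L2: "rz eb = 0"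
      unfolding L_def Lmap_def qe by (simp_all add: zero_prod_def)
    have eb0: "eb = 0" using rz_inj[OF m(4) L2] .
    have f1e: "f1 = rz e1" using L1 by (simp add: eb0 incB_adj_zero rz_zero)
    have "rz e1 = - tadj E src tgt (V - Vb) (rz e0)"
      unfolding e0(2) by (simp add: eb0 incB_adj_zero rz_zero rz_diff rz_uminus rz_adj)
    then have "f1 + tadj E src tgt (V - Vb) (rz e0) = 0" using f1e by simp
    then have "ip E f1 (f1 + tadj E src tgt (V - Vb) (rz e0)) = 0" by (simp add: ip_zero_right)
    then have "ip E f1 f1 = 0"
      by (simp add: ip_add_right ip_tadj m(5))
    then have "\<forall>x\<in>E. f1 x = 0" using ip_self_zero[OF fin(2)] by blast
    then have f10: "f1 = 0" using m(1) by (auto simp: prim_space_def fun_eq_iff)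
    have "fb = 0" using m(6) by (simp add: f10 incB_zero)
    moreover have "e1 = 0" using rz_inj[OF m(3)] f1e f10 by simp
    ultimately show "q = 0" using qe eb0 f10 by (simp add: zero_prod_def)
  qed
  have inj: "inj_on L D"
    using module_hom.inj_on_iff_eq_0[OF Lmap_hom sub] ker unfolding L_def by blast
  have img: "L ` D = flow_space E Vb"
  proof
    show "L ` D \<subseteq> flow_space E Vb"
    proof
      fix y assume "y \<in> L ` D"
      then obtain q where q: "q \<in> D" "y = L q" by blast
      obtain f1 fb e1 eb where qe: "q = ((f1, fb), (e1, eb))" by (metis prod.collapse)
      from q have m: "f1 \<in> prim_space E" "fb \<in> prim_space Vb" "e1 \<in> dual_space E" "eb \<in> dual_space Vb"
        unfolding qe D_def kd_mem by blast+
      show "y \<in> flow_space E Vb"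
        unfolding q(2) qe L_def Lmap_def flow_space_def
        using m by (auto intro!: prim_diff rz_prim adj_dual)
    qed
  next
    show "flow_space E Vb \<subseteq> L ` D"
    proof
      fix y assume "y \<in> (flow_space E Vb :: ('e,'v,'r) flow set)"
      then obtain g h where y: "y = (g, h)" "g \<in> prim_space E" "h \<in> prim_space Vb"
        by (auto simp: flow_space_def)
      obtain e0 where e0: "e0 \<in> dual_space (V - Vb)"
        "incB E src tgt (V - Vb) (g - rz (incB_adj E src tgt (V - Vb) e0)) = 0"
        using decomp[OF fin(2) finVi] by blast
      define eb where "eb = rho h"
      define f1 where "f1 = g - rz (incB_adj E src tgt (V - Vb) e0)"
      define e1 where "e1 = - incB_adj E src tgt (V - Vb) e0 - incB_adj E src tgt Vb eb"
      have ebd: "eb \<in> dual_space Vb" unfolding eb_def using y(3) by (rule rho_dual)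
      have "((f1, incB E src tgt Vb f1), (e1, eb)) \<in> D"
        unfolding D_def kd_mem
      proof (intro conjI bexI[of _ e0])
        show "f1 \<in> prim_space E" unfolding f1_def using y(2) e0(1) by (intro prim_diff rz_prim adj_dual)
        show "e1 \<in> dual_space E" unfolding e1_def using e0(1) ebd by (intro dual_diff dual_uminus adj_dual)
      qed (use ebd e0 in \<open>simp_all add: incB_prim f1_def e1_def\<close>)
      moreover have "L ((f1, incB E src tgt Vb f1), (e1, eb)) = y"
        unfolding L_def Lmap_def y(1) by (simp add: e1_def f1_def eb_def rz_rho rz_diff rz_uminus)
      ultimately show "y \<in> L ` D" by (metis image_eqI)
    qed
  qed
  have dimeq: "vector_space.dim scale_bond D = vector_space.dim scale_flow (flow_space E Vb :: ('e,'v,'r) flow set)"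
    by (rule dim_transfer[OF vs_bond vs_flow _ sub inj img]) (simp add: L_def Lmap_hom)
  have iso: "\<forall>(f, e)\<in>D. flow_pairing E Vb e f = 0"
    using sepD by blast
  show ?thesis
    unfolding separable_dirac_def dirac_structure_def D_def[symmetric]
    using sub subset iso dimeq sepD by blast
qed

end
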